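(* (AdS shift.) Consider the single-fluid shifted system with $\sigma<0$, and let $t_{\mathrm b},\xi_{\mathrm b},\xi_0,t_0$ be as in the time-interval setup and $b:=\max_{t\in[t_{\mathrm b},t_0]}\sqrt2\,|y_{\mathrm i}(t)|h(t)/l>0$. Then $$\Delta t_{\mathrm b0}\ \ge\ \frac{1}{2\sqrt{2\xi_0}}\,\frac{1}{b\,c\,l}\,\frac{\xi_0-\xi_{\mathrm b}}{\sqrt{1+|\sigma|/h(t_0)^2}}.$$
   Context: Shifted single-fluid system. Fix real constants $c>0$, $l>0$, $w\in[-1,1]$ and $\sigma\in\mathbb{R}$. Let $I\subseteq\mathbb R$ be an interval and $x,y_{\mathrm r},y_{\mathrm i},z,h$ real $C^1$ functions on $I$ with $h>0$, $z\ge0$. Define $\xi=x^2+\frac{1+w}{2}z^2$. Assume on $I$: $\dot x=[-x+4c\,y_{\mathrm r}y_{\mathrm i}+x\xi]h$, $\dot y_{\mathrm r}=[\xi y_{\mathrm r}-c\,x\,y_{\mathrm i}]h$, $\dot y_{\mathrm i}=[\xi y_{\mathrm i}+c\,x\,y_{\mathrm r}]h$, $\dot z=[-\frac{1+w}{2}+\xi]zh$, $\dot h=-\xi h^2$, with constraints $x^2+4y_{\mathrm r}^2+z^2=1-\sigma/h^2$ and $y_{\mathrm r}^2+y_{\mathrm i}^2=\frac{l^2}{2h^2}$. (Here $\sigma=L^2$ encodes a cosmological constant $\Lambda$ added to the cosine potential, of the sign of $\Lambda$.) Time-interval setup: let $t_{\mathrm b}\in I$, $\xi_{\mathrm b}:=\xi(t_{\mathrm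 b})$, and let $\xi_0$ be a real number with $\xi_0>0$ and $\xi_{\mathrm b}\le\xi_0\le\frac{1+w}{2}$. Assume the set $\{t\in I:\ t\ge t_{\mathrm b},\ \xi(t)=\xi_0\}$ is nonempty and let $t_0$ be its minimum (so $\xi(t)\le\xi_0$ for all $t\in[t_{\mathrm b},t_0]$); put $\Delta t_{\mathrm b0}=t_0-t_{\mathrm b}$. *)

theory Defs
  imports "HOL-Analysis.Analysis"
begin

definition xi_fun :: "real \<Rightarrow> (real \<Rightarrow> real) \<Rightarrow> (real \<Rightarrow> real) \<Rightarrow> real \<Rightarrow> real" where
  "xi_fun w x z t = (x t)^2 + (1 + w) / 2 * (z t)^2"

end

theory Submission
  imports Defs
begin

theorem mainTheorem4:
  fixes c l w \<sigma> :: real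
    and I :: "real set"
    and x yr yi z h :: "real \<Rightarrow> real"
    and tb \<xi>0 :: real
  assumes c_pos: "c > 0" and l_pos: "l > 0" and w_range: "-1 \<le> w" "w \<le> 1"
    and I_int: "is_interval I"
    and h_pos: "\<And>t. t \<in> I \<Longrightarrow> h t > 0"
    and z_nonneg: "\<And>t. t \<in> I \<Longrightarrow> z t \<ge> 0"
    and dx: "\<And>t. t \<in> I \<Longrightarrow> (x has_real_derivative
              ((- x t + 4 * c * yr t * yi t + x t * xi_fun w x z t) * h t)) (at t within I)"
    and dyr: "\<And>t. t \<in> I \<Longrightarrow> (yr has_real_derivative
              ((xi_fun w x z t * yr t - c * x t * yi t) * h t)) (at t within I)"
    and dyi: "\<And>t. t \<in> I \<Longrightarrow> (yi has_real_derivative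
              ((xi_fun w x z t * yi t + c * x t * yr t) * h t)) (at t within I)"
    and dz: "\<And>t. t \<in> I \<Longrightarrow> (z has_real_derivative
              ((- (1 + w) / 2 + xi_fun w x z t) * z t * h t)) (at t within I)"
    and dh: "\<And>t. t \<in> I \<Longrightarrow> (h has_real_derivative
              (- xi_fun w x z t * (h t)^2)) (at t within I)"
    and constr1: "\<And>t. t \<in> I \<Longrightarrow> (x t)^2 + 4 * (yr t)^2 + (z t)^2 = 1 - \<sigma> / (h t)^2"
    and constr2: "\<And>t. t \<in> I \<Longrightarrow> (yr t)^2 + (yi t)^2 = l^2 / (2 * (h t)^2)"
    and sigma_neg: "\<sigma> < 0"
    and tb_in: "tb \<in> I"
    and xi0_pos: "\<xi>0 > 0"
    and xi0_ge: "xi_fun w x z tb \<le> \<xi>0"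
    and xi0_le: "\<xi>0 \<le> (1 + w) / 2"
    and nonempty: "{t \<in> I. t \<ge> tb \<and> xi_fun w x z t = \<xi>0} \<noteq> {}"
  shows "let t0 = Inf {t \<in> I. t \<ge> tb \<and> xi_fun w x z t = \<xi>0};
             b = (SUP t\<in>{tb..t0}. sqrt 2 * \<bar>yi t\<bar> * h t / l)
         in t0 - tb \<ge> 1 / (2 * sqrt (2 * \<xi>0)) * (1 / (b * c * l))
                       * ((\<xi>0 - xi_fun w x z tb) / sqrt (1 + \<bar>\<sigma>\<bar> / (h t0)^2))"
proof -
  define X where "X = xi_fun w x z"
  define S0 where "S0 = {t \<in> I. t \<ge> tb \<and> X t = \<xi>0}"
  define t0 where "t0 = Inf S0"
  have Xt: "X t = (x t)^2 + (1 + w) / 2 * (z t)^2" for t by (simp add: X_def xi_fun_def)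
  have Xnn: "X t \<ge> 0" for t using w_range unfolding Xt
    by (intro add_nonneg_nonneg mult_nonneg_nonneg) auto
  have xsq: "(x t)^2 \<le> X t" for t using w_range unfolding Xt
    by (smt (verit) divide_nonneg_nonneg mult_nonneg_nonneg zero_le_power2)
  have dX: "(X has_real_derivative
      (2 * x t * ((- x t + 4 * c * yr t * yi t + x t * X t) * h t)
       + (1 + w) / 2 * (2 * z t * ((- (1 + w) / 2 + X t) * z t * h t)))) (at t within I)"
    if "t \<in> I" for t
  proof -
    have "((\<lambda>t. (x t)^2 + (1 + w) / 2 * (z t)^2) has_real_derivative
      (2 * x t * ((- x t + 4 * c * yr t * yi t + x t * X t) * h t)
       + (1 + w) / 2 * (2 * z t * ((- (1 + w) / 2 + X t) * z t * h t)))) (at t within I)"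
      using dx[OF that] dz[OF that] unfolding X_def
      by (auto intro!: derivative_eq_intros simp: power2_eq_square)
    moreover have "(\<lambda>t. (x t)^2 + (1 + w) / 2 * (z t)^2) = X" using Xt by auto
    ultimately show ?thesis by simp
  qed
  have contI: "continuous_on I f" if "\<And>t. t \<in> I \<Longrightarrow> (f has_real_derivative f' t) (at t within I)"
    for f f'
    using that continuous_on_eq_continuous_within DERIV_continuous by blast
  have cX: "continuous_on I X" by (rule contI, rule dX)
  have ch: "continuous_on I h" by (rule contI, rule dh)
  have cyi: "continuous_on I yi" by (rule contI, rule dyi)
  have intv: "{a..b} \<subseteq> I" if "a \<in> I" "b \<in> I" for a b
    using I_int that unfolding is_interval_1 by (meson atLeastAtMost_iff subsetI)
  obtain s where s: "s \<in> S0" using nonempty unfolding S0_def X_def by blast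
  have sI: "s \<in> I" and tbs: "tb \<le> s" and Xs: "X s = \<xi>0" using s unfolding S0_def by auto
  define C where "C = {t \<in> {tb..s}. X t = \<xi>0}"
  have "closed C" unfolding C_def
    by (rule continuous_closed_preimage_constant)
       (use continuous_on_subset[OF cX intv[OF tb_in sI]] in auto)
  moreover have "C \<noteq> {}" using s tbs Xs unfolding C_def by auto
  moreover have "bdd_below C" unfolding C_def by (rule bdd_belowI[of _ tb]) auto
  ultimately have InfC: "Inf C \<in> C" using closed_contains_Inf by blast
  have "Inf S0 = Inf C"
  proof (rule cInf_eq_minimum)
    show "Inf C \<in> S0" using InfC intv[OF tb_in sI] unfolding C_def S0_def by auto
    fix t assume t: "t \<in> S0"
    show "Inf C \<le> t"
    proof (cases "t \<le> s")
      case True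
      then have "t \<in> C" using t unfolding C_def S0_def by auto
      then show ?thesis using \<open>bdd_below C\<close> by (simp add: cInf_lower)
    next
      case False
      then show ?thesis using InfC unfolding C_def by auto
    qed
  qed
  then have t0C: "t0 \<in> C" using InfC t0_def by simp
  have tbt0: "tb \<le> t0" and t0s: "t0 \<le> s" and Xt0: "X t0 = \<xi>0" using t0C unfolding C_def by auto
  have t0I: "t0 \<in> I" using intv[OF tb_in sI] tbt0 t0s by auto
  have sub: "{tb..t0} \<subseteq> I" using intv[OF tb_in t0I] .
  have t0_min: "t0 \<le> u" if "u \<in> I" "tb \<le> u" "X u = \<xi>0" for u
  proof -
    have "u \<in> S0" using that unfolding S0_def by auto
    moreover have "bdd_below S0" unfolding S0_def by (rule bdd_belowI[of _ tb]) auto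
    ultimately show ?thesis unfolding t0_def by (simp add: cInf_lower)
  qed
  have Xle: "X t \<le> \<xi>0" if "t \<in> {tb..t0}" for t
  proof (rule ccontr)
    assume "\<not> X t \<le> \<xi>0"
    then have "X tb \<le> \<xi>0" "\<xi>0 \<le> X t" using xi0_ge unfolding X_def by auto
    moreover have "tb \<le> t" using that by auto
    moreover have "continuous_on {tb..t} X"
      proof (rule continuous_on_subset[OF cX])
      show "{tb..t} \<subseteq> I" using sub that by (auto simp: subset_iff)
    qed
    ultimately obtain u where u: "tb \<le> u" "u \<le> t" "X u = \<xi>0" using IVT' by blast
    have "u \<in> I" using u that sub by auto
    then have "t0 \<le> u" using t0_min u by auto
    then have "t = t0" using u that by auto
    then show False using Xt0 \<open>\<not> X t \<le> \<xi>0\<close> by simp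
  qed
  have interior: "t \<in> interior I" if "tb < t" "t < t0" for t
  proof -
    have "{tb<..<t0} \<subseteq> I" using sub by auto
    then have "{tb<..<t0} \<subseteq> interior I" by (simp add: interior_maximal)
    then show ?thesis using that by auto
  qed
  have hmono: "h t0 \<le> h t" if "t \<in> {tb..t0}" for t
  proof (cases "t < t0")
    case True
    have tI: "t \<in> I" using that sub by auto
    have "continuous_on {t..t0} h" proof (rule continuous_on_subset[OF ch])
      show "{t..t0} \<subseteq> I" using sub that by (auto simp: subset_iff)
    qed
    moreover have "h differentiable (at u)" if "t < u" "u < t0" for u
    proof -
      have "u \<in> interior I" using interior \<open>t < u\<close> \<open>u < t0\<close> \<open>t \<in> {tb..t0}\<close> by auto
      then have "u \<in> I" using interior_subset by blast
      then show ?thesis using dh[of u] at_within_interior[OF \<open>u \<in> interior I\<close>]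
        by (auto simp: real_differentiable_def)
    qed
    ultimately obtain D u where u: "t < u" "u < t0" "DERIV h u :> D" "h t0 - h t = (t0 - t) * D"
      using MVT[OF True] by blast
    have ui: "u \<in> interior I" using interior u that by auto
    then have "u \<in> I" using interior_subset by blast
    then have "DERIV h u :> - X u * (h u)^2" using dh[of u] at_within_interior[OF ui] X_def by auto
    then have "D = - X u * (h u)^2" using u DERIV_unique by blast
    then have "D \<le> 0" using Xnn[of u] by simp
    then show ?thesis using u True by (smt (verit) mult_nonneg_nonpos)
  next
    case False
    then have "t = t0" using that by auto
    then show ?thesis by simp
  qed
  define f where "f t = sqrt 2 * \<bar>yi t\<bar> * h t / l" for t
  define b where "b = (SUP t\<in>{tb..t0}. f t)"
  have cf: "continuous_on {tb..t0} f" unfolding f_def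
    using continuous_on_subset[OF ch sub] continuous_on_subset[OF cyi sub]
    using l_pos by (intro continuous_intros) auto
  have bddf: "bdd_above (f ` {tb..t0})"
    using compact_continuous_image[OF cf compact_Icc] by (simp add: bounded_imp_bdd_above compact_imp_bounded)
  have fb: "f t \<le> b" if "t \<in> {tb..t0}" for t
    unfolding b_def using bddf that by (rule cSUP_upper2) auto
  have b_nn: "b \<ge> 0"
  proof -
    have "f tb \<ge> 0" using h_pos[OF tb_in] l_pos unfolding f_def by auto
    then show ?thesis using fb[of tb] tbt0 by auto
  qed
  define Sg where "Sg = 1 + \<bar>\<sigma>\<bar> / (h t0)^2"
  define M where "M = 2 * sqrt (2 * \<xi>0) * b * c * l * sqrt Sg"
  have Sg_nn: "Sg \<ge> 0" unfolding Sg_def by auto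
  have dbound: "D \<le> M" if "tb < t" "t < t0" "DERIV X t :> D" for t D
  proof -
    have ti: "t \<in> interior I" using interior that by auto
    then have tI: "t \<in> I" using interior_subset by blast
    have tr: "t \<in> {tb..t0}" using that by auto
    have D: "D = 2 * x t * ((- x t + 4 * c * yr t * yi t + x t * X t) * h t)
       + (1 + w) / 2 * (2 * z t * ((- (1 + w) / 2 + X t) * z t * h t))"
      using dX[OF tI] at_within_interior[OF ti] that(3) DERIV_unique by auto
    have ht: "h t > 0" using h_pos tI by auto
    have h0: "h t0 > 0" using h_pos t0I by auto
    have X0: "X t \<le> (1 + w) / 2" using Xle[OF tr] xi0_le by simp
    have key: "2 * (X t)^2 \<le> 2 * (x t)^2 + (1 + w)^2 / 2 * (z t)^2"
    proof -
      have "2 * (X t)^2 \<le> 2 * X t * ((1 + w) / 2)"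
        using mult_left_mono[OF X0 Xnn[of t]] by (simp add: power2_eq_square)
      also have "\<dots> = (1 + w) * (x t)^2 + (1 + w)^2 / 2 * (z t)^2"
        unfolding Xt by (simp add: power2_eq_square field_simps)
      also have "\<dots> \<le> 2 * (x t)^2 + (1 + w)^2 / 2 * (z t)^2"
        using w_range by (simp add: mult_right_mono)
      finally show ?thesis .
    qed
    have D2: "D = h t * (2 * (X t)^2 - 2 * (x t)^2 - (1 + w)^2 / 2 * (z t)^2) + 8 * c * h t * x t * yr t * yi t"
      unfolding D Xt by (simp add: power2_eq_square field_simps)
    have "D \<le> 8 * c * h t * x t * yr t * yi t"
      unfolding D2 using key ht by (smt (verit) mult_nonneg_nonpos)
    also have "\<dots> \<le> 8 * c * \<bar>x t\<bar> * \<bar>yr t\<bar> * (\<bar>yi t\<bar> * h t)"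
      using ht c_pos by (simp add: abs_mult[symmetric] mult_ac abs_le_iff)
    also have "\<dots> \<le> 8 * c * sqrt \<xi>0 * (sqrt Sg / 2) * (b * l / sqrt 2)"
    proof -
      have ax: "\<bar>x t\<bar> \<le> sqrt \<xi>0" using xsq[of t] Xle[OF tr] by (simp add: real_le_rsqrt)
      have "4 * (yr t)^2 \<le> 1 - \<sigma> / (h t)^2"
        using constr1[OF tI] by (smt (verit) zero_le_power2)
      also have "\<dots> = 1 + \<bar>\<sigma>\<bar> / (h t)^2" using sigma_neg by simp
      also have "\<dots> \<le> Sg" unfolding Sg_def using hmono[OF tr] h0
        by (intro add_left_mono divide_left_mono) (auto intro: power_mono)
      finally have "(2 * \<bar>yr t\<bar>)^2 \<le> Sg" by (simp add: power2_eq_square)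
      then have "2 * \<bar>yr t\<bar> \<le> sqrt Sg" using real_le_rsqrt by blast
      then have ayr: "\<bar>yr t\<bar> \<le> sqrt Sg / 2" by simp
      have "f t \<le> b" using fb[OF tr] .
      then have "sqrt 2 * (\<bar>yi t\<bar> * h t) \<le> b * l" unfolding f_def using l_pos
        by (simp add: pos_divide_le_eq mult_ac)
      then have ayi: "\<bar>yi t\<bar> * h t \<le> b * l / sqrt 2"
        by (simp add: pos_le_divide_eq mult_ac)
      show ?thesis using ax ayr ayi c_pos ht xi0_pos Sg_nn
        by (intro mult_mono) auto
    qed
    also have "\<dots> = M"
    proof -
      have "sqrt (2 * \<xi>0) = sqrt 2 * sqrt \<xi>0" by (simp add: real_sqrt_mult)
      moreover have "sqrt 2 * sqrt 2 = 2" by simp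
      ultimately show ?thesis unfolding M_def
        by (simp add: field_simps)
    qed
    finally show ?thesis .
  qed
  have main: "\<xi>0 - X tb \<le> (t0 - tb) * M"
  proof (cases "tb < t0")
    case True
    have "continuous_on {tb..t0} X" using continuous_on_subset[OF cX sub] .
    moreover have "X differentiable (at u)" if "tb < u" "u < t0" for u
    proof -
      have ui: "u \<in> interior I" using interior that by auto
      then have "u \<in> I" using interior_subset by blast
      then show ?thesis using dX[of u] at_within_interior[OF ui]
        by (auto simp: real_differentiable_def)
    qed
    ultimately obtain D u where u: "tb < u" "u < t0" "DERIV X u :> D" "X t0 - X tb = (t0 - tb) * D"
      using MVT[OF True] by blast
    then have "D \<le> M" using dbound by blast
    then show ?thesis using u Xt0 True by (smt (verit) mult_left_mono)
  next
    case False
    then have "t0 = tb" using tbt0 by auto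
    then show ?thesis using Xt0 by simp
  qed
  have "1 / (2 * sqrt (2 * \<xi>0)) * (1 / (b * c * l)) * ((\<xi>0 - X tb) / sqrt Sg) \<le> t0 - tb"
  proof (cases "b = 0")
    case True
    then show ?thesis using tbt0 by simp
  next
    case False
    then have bp: "b > 0" using b_nn by auto
    have Sgp: "Sg > 0" unfolding Sg_def by (smt (verit) divide_nonneg_nonneg zero_le_power2 abs_ge_zero)
    have Mp: "M > 0" unfolding M_def using bp c_pos l_pos Sgp xi0_pos by auto
    have "1 / (2 * sqrt (2 * \<xi>0)) * (1 / (b * c * l)) * ((\<xi>0 - X tb) / sqrt Sg) = (\<xi>0 - X tb) / M"
      unfolding M_def by (simp add: field_simps)
    also have "\<dots> \<le> t0 - tb" using main Mp by (simp add: divide_le_eq mult.commute)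
    finally show ?thesis .
  qed
  then show ?thesis unfolding Let_def S0_def t0_def b_def f_def Sg_def X_def [symmetric]
    by (simp add: X_def S0_def t0_def)
qed

end
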